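(* If $\{x_k\}_{k\ge0}$ is log-convex, then the sequence $z_n=\sum_{k=0}^n\binom{n+k}{n-k}x_k$, $n\ge 0$, is log-convex.
   Context: A sequence $a_0,a_1,\ldots$ of nonnegative reals is log-convex if $a_{k-1}a_{k+1}\ge a_k^2$ for all $k\ge1$. *)

theory Defs
  imports Complex_Main
begin

definition log_convex :: "(nat \<Rightarrow> real) \<Rightarrow> bool" where
  "log_convex a \<longleftrightarrow> (\<forall>k. 0 \<le> a k) \<and> (\<forall>k\<ge>1. a (k - 1) * a (k + 1) \<ge> (a k)^2)"

end

theory Submission
  imports Defs
begin

definition cf :: "nat \<Rightarrow> nat \<Rightarrow> real" where
  "cf N k = real ((N + k) choose (2*k))"

lemma cf_zero: "N < k \<Longrightarrow> cf N k = 0"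
  unfolding cf_def by (simp add: binomial_eq_0)

lemma cf_0 [simp]: "cf N 0 = 1"
  unfolding cf_def by simp

lemma cf_nonneg: "0 \<le> cf N k"
  unfolding cf_def by simp

lemma R1: "real (Suc p + k) * cf p k = (real (Suc p) - real k) * cf (Suc p) k"
proof (cases "k \<le> Suc p")
  case True
  have "(Suc (p+k) - 2*k) * (Suc (p+k) choose (2*k)) = Suc (p+k) * ((p+k) choose (2*k))"
    using binomial_absorb_comp[of "Suc (p+k)" "2*k"] by simp
  then have "real (Suc (p+k) - 2*k) * real (Suc (p+k) choose (2*k)) = real (Suc (p+k)) * real ((p+k) choose (2*k))"
    by (metis of_nat_mult)
  moreover have "real (Suc (p+k) - 2*k) = real (Suc p) - real k" using True by (simp add: of_nat_diff)
  ultimately show ?thesis unfolding cf_def by (simp add: algebra_simps)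
next
  case False
  then show ?thesis using cf_zero[of p k] cf_zero[of "Suc p" k] by simp
qed

lemma absorb2: "Suc k * (n choose Suc k) = (n - k) * (n choose k)"
  using binomial_absorption[of k n] binomial_absorb_comp[of n k] by simp

lemma R3: "real (2*Suc k) * real (Suc (2*k)) * cf (Suc p) (Suc k)
   = real (Suc p + Suc k) * (real (Suc p) - real k) * cf (Suc p) k"
proof (cases "k \<le> Suc p")
  case True
  define N where "N = Suc p + k"
  have e1: "Suc (Suc (2*k)) * (Suc N choose Suc (Suc (2*k))) = Suc N * (N choose Suc (2*k))"
    by (rule Suc_times_binomial)
  have e2: "Suc (2*k) * (N choose Suc (2*k)) = (N - 2*k) * (N choose (2*k))"
    by (rule absorb2)
  have "real (Suc (Suc (2*k))) * real (Suc (2*k)) * real (Suc N choose Suc (Suc (2*k)))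
      = real (Suc N) * real (N - 2*k) * real (N choose (2*k))"
  proof -
    have "real (Suc (Suc (2*k))) * real (Suc N choose Suc (Suc (2*k))) = real (Suc N) * real (N choose Suc (2*k))"
      using e1 by (metis of_nat_mult)
    moreover have "real (Suc (2*k)) * real (N choose Suc (2*k)) = real (N - 2*k) * real (N choose (2*k))"
      using e2 by (metis of_nat_mult)
    ultimately show ?thesis by (metis mult.commute mult.left_commute)
  qed
  moreover have "real (N - 2*k) = real (Suc p) - real k" using True unfolding N_def by (simp add: of_nat_diff)
  ultimately show ?thesis unfolding cf_def N_def by (simp add: algebra_simps)
next
  case False
  then show ?thesis using cf_zero[of "Suc p" k] cf_zero[of "Suc p" "Suc k"] by simp
qed

lemma R4: "cf (Suc (Suc p)) (Suc k) + cf p (Suc k) = 2 * cf (Suc p) (Suc k) + cf (Suc p) k"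
proof -
  define N where "N = p + k"
  define K where "K = 2*k"
  have f1: "Suc (Suc (Suc N)) choose Suc (Suc K) = (Suc (Suc N) choose Suc K) + (Suc (Suc N) choose Suc (Suc K))"
    by (rule binomial_Suc_Suc)
  have f2: "Suc (Suc N) choose Suc K = (Suc N choose K) + (Suc N choose Suc K)"
    by (rule binomial_Suc_Suc)
  have f3: "Suc (Suc N) choose Suc (Suc K) = (Suc N choose Suc K) + (Suc N choose Suc (Suc K))"
    by (rule binomial_Suc_Suc)
  have "(Suc (Suc (Suc N)) choose Suc (Suc K)) + (Suc N choose Suc (Suc K))
      = 2 * (Suc (Suc N) choose Suc (Suc K)) + (Suc N choose K)"
    using f1 f2 f3 by linarith
  then have "real (Suc (Suc (Suc N)) choose Suc (Suc K)) + real (Suc N choose Suc (Suc K))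
      = 2 * real (Suc (Suc N) choose Suc (Suc K)) + real (Suc N choose K)"
    by (metis of_nat_add of_nat_mult of_nat_numeral)
  moreover have "Suc (Suc p) + Suc k = Suc (Suc (Suc N))" "p + Suc k = Suc N" "Suc p + Suc k = Suc (Suc N)"
    "Suc p + k = Suc N" "2 * Suc k = Suc (Suc K)" unfolding N_def K_def by simp_all
  ultimately show ?thesis unfolding cf_def K_def by simp
qed


lemma core_poly:
  fixes n I J u v :: real
  shows "(I+J-1)*(((n-I)*(n-I+1)*u)*(2*((n+J)*(n-J+1)*v) + 2*J*(2*J-1)*v - (n-J)*(n-J+1)*v)
     + ((n-J)*(n-J+1)*v)*(2*((n+I)*(n-I+1)*u) + 2*I*(2*I-1)*u - (n-I)*(n-I+1)*u)
     - 2*((n+I)*(n-I+1)*u)*((n+J)*(n-J+1)*v))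
   = (J-1-I)*((n+I)*(n-I+1)*u)*(2*J*(2*J-1)*v) - (J-I+1)*(2*I*(2*I-1)*u)*((n+J)*(n-J+1)*v)"
  by algebra

lemma param:
  fixes p i :: nat
  defines "n \<equiv> real (Suc p)" and "I \<equiv> real (Suc i)"
  obtains u where "cf (Suc p) i = 2*I*(2*I-1)*u"
    "cf (Suc p) (Suc i) = (n+I)*(n-I+1)*u"
    "cf p (Suc i) = (n-I)*(n-I+1)*u"
    "cf (Suc (Suc p)) (Suc i) = 2*((n+I)*(n-I+1)*u) + 2*I*(2*I-1)*u - (n-I)*(n-I+1)*u"
proof -
  define u where "u = cf (Suc p) i / (2*I*(2*I-1))"
  have D: "2*I*(2*I-1) > 0" unfolding I_def by simp
  have Dne: "2*I*(2*I-1) \<noteq> 0" using D by linarith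
  have h1: "cf (Suc p) i = 2*I*(2*I-1)*u" unfolding u_def using Dne by (simp add: field_simps)
  have r3: "real (2*Suc i) * real (Suc (2*i)) * cf (Suc p) (Suc i)
     = real (Suc p + Suc i) * (real (Suc p) - real i) * cf (Suc p) i" by (rule R3)
  have e1: "real (2*Suc i) * real (Suc (2*i)) = 2*I*(2*I-1)" unfolding I_def by simp
  have e2: "real (Suc p + Suc i) = n + I" "real (Suc p) - real i = n - I + 1" unfolding n_def I_def by simp_all
  have h2: "cf (Suc p) (Suc i) = (n+I)*(n-I+1)*u"
  proof -
    have "2*I*(2*I-1) * cf (Suc p) (Suc i) = 2*I*(2*I-1) * ((n+I)*(n-I+1)*u)"
      using r3 unfolding e1 e2 h1 by (simp add: algebra_simps)
    then show ?thesis using Dne by simp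
  qed
  have r1: "real (Suc p + Suc i) * cf p (Suc i) = (real (Suc p) - real (Suc i)) * cf (Suc p) (Suc i)"
    by (rule R1)
  have npos: "n + I > 0" unfolding n_def I_def by simp
  have h3: "cf p (Suc i) = (n-I)*(n-I+1)*u"
  proof -
    have "(n+I) * cf p (Suc i) = (n+I) * ((n-I)*(n-I+1)*u)"
      using r1 unfolding e2 h2 by (simp add: n_def I_def algebra_simps)
    then show ?thesis using npos by simp
  qed
  have r4: "cf (Suc (Suc p)) (Suc i) + cf p (Suc i) = 2 * cf (Suc p) (Suc i) + cf (Suc p) i"
    by (rule R4)
  have h4: "cf (Suc (Suc p)) (Suc i) = 2*((n+I)*(n-I+1)*u) + 2*I*(2*I-1)*u - (n-I)*(n-I+1)*u"
    using r4 h1 h2 h3 by linarith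
  show ?thesis using that h1 h2 h3 h4 by blast
qed

lemma local_S:
  fixes p i j :: nat
  shows "(real (Suc i) + real (Suc j) - 1) *
      (cf p (Suc i) * cf (Suc (Suc p)) (Suc j) + cf p (Suc j) * cf (Suc (Suc p)) (Suc i)
       - 2 * cf (Suc p) (Suc i) * cf (Suc p) (Suc j))
    = (real (Suc j) - 1 - real (Suc i)) * cf (Suc p) (Suc i) * cf (Suc p) j
      - (real (Suc j) - real (Suc i) + 1) * cf (Suc p) i * cf (Suc p) (Suc j)"
proof -
  obtain u where u: "cf (Suc p) i = 2*real (Suc i)*(2*real (Suc i)-1)*u"
    "cf (Suc p) (Suc i) = (real (Suc p)+real (Suc i))*(real (Suc p)-real (Suc i)+1)*u"
    "cf p (Suc i) = (real (Suc p)-real (Suc i))*(real (Suc p)-real (Suc i)+1)*u"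
    "cf (Suc (Suc p)) (Suc i) = 2*((real (Suc p)+real (Suc i))*(real (Suc p)-real (Suc i)+1)*u)
        + 2*real (Suc i)*(2*real (Suc i)-1)*u - (real (Suc p)-real (Suc i))*(real (Suc p)-real (Suc i)+1)*u"
    using param[of p i] by blast
  obtain v where v: "cf (Suc p) j = 2*real (Suc j)*(2*real (Suc j)-1)*v"
    "cf (Suc p) (Suc j) = (real (Suc p)+real (Suc j))*(real (Suc p)-real (Suc j)+1)*v"
    "cf p (Suc j) = (real (Suc p)-real (Suc j))*(real (Suc p)-real (Suc j)+1)*v"
    "cf (Suc (Suc p)) (Suc j) = 2*((real (Suc p)+real (Suc j))*(real (Suc p)-real (Suc j)+1)*v)
        + 2*real (Suc j)*(2*real (Suc j)-1)*v - (real (Suc p)-real (Suc j))*(real (Suc p)-real (Suc j)+1)*v"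
    using param[of p j] by blast
  show ?thesis unfolding u v by (rule core_poly)
qed

lemma lc_zero:
  assumes lc: "log_convex x" and "x k = 0" shows "x (Suc k) = 0"
proof -
  have nn: "\<And>k. 0 \<le> x k" and h: "x (Suc k - 1) * x (Suc k + 1) \<ge> (x (Suc k))^2"
    using lc unfolding log_convex_def by auto
  then have "(x (Suc k))^2 \<le> 0" using assms(2) by simp
  then show ?thesis by simp
qed

lemma lc_mono:
  assumes lc: "log_convex x" and pq: "p \<le> q"
  shows "x (Suc p) * x q \<le> x p * x (Suc q)"
  using pq
proof (induction q rule: dec_induct)
  case base
  then show ?case by (simp add: mult.commute)
next
  case (step q)
  have nn: "\<And>k. 0 \<le> x k" using lc unfolding log_convex_def by auto
  have all: "\<forall>k\<ge>1. x (k - 1) * x (k + 1) \<ge> (x k)^2"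
    using lc unfolding log_convex_def by blast
  have h': "x q * x (Suc (Suc q)) \<ge> x (Suc q) * x (Suc q)"
    using all[rule_format, of "Suc q"] by (simp add: power2_eq_square)
  show ?case
  proof (cases "x (Suc q) = 0")
    case True
    then show ?thesis using nn by simp
  next
    case False
    then have pos1: "x (Suc q) > 0" using nn[of "Suc q"] by simp
    have "x q \<noteq> 0" using False lc_zero[OF lc, of q] by blast
    then have pos0: "x q > 0" using nn[of q] by simp
    have "x (Suc p) * x (Suc q) * (x q * x (Suc q)) = (x (Suc p) * x q) * (x (Suc q) * x (Suc q))"
      by (simp add: algebra_simps)
    also have "\<dots> \<le> (x p * x (Suc q)) * (x (Suc q) * x (Suc q))"
      by (rule mult_right_mono[OF step.IH]) simp
    also have "\<dots> \<le> (x p * x (Suc q)) * (x q * x (Suc (Suc q)))"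
      by (rule mult_left_mono[OF h']) (simp add: nn)
    also have "\<dots> = (x p * x (Suc (Suc q))) * (x q * x (Suc q))"
      by (simp add: algebra_simps)
    finally show ?thesis using pos0 pos1 by (simp add: mult_le_cancel_right_pos)
  qed
qed

definition Fc :: "nat \<Rightarrow> nat \<Rightarrow> nat \<Rightarrow> real" where
  "Fc p i j = (real j - real i) * cf (Suc p) i * cf (Suc p) j / (real i + real j)"

definition Sc :: "nat \<Rightarrow> nat \<Rightarrow> nat \<Rightarrow> real" where
  "Sc p i j = cf p i * cf (Suc (Suc p)) j + cf p j * cf (Suc (Suc p)) i - 2 * cf (Suc p) i * cf (Suc p) j"

lemma S_eq:
  "Sc p i j = (if i + j = 1 then 1 else 0)
     + (if j = 0 then 0 else Fc p i (j - 1)) - (if i = 0 then 0 else Fc p (i - 1) j)"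
proof (cases i)
  case 0
  note i0 = 0
  show ?thesis
  proof (cases j)
    case 0
    then show ?thesis using i0 by (simp add: Sc_def)
  next
    case (Suc j')
    have r4: "cf (Suc (Suc p)) (Suc j') + cf p (Suc j') = 2 * cf (Suc p) (Suc j') + cf (Suc p) j'"
      by (rule R4)
    show ?thesis
    proof (cases j')
      case 0
      then show ?thesis using i0 Suc r4 by (simp add: Sc_def Fc_def)
    next
      case (Suc j'')
      then show ?thesis using i0 \<open>j = Suc j'\<close> r4 by (simp add: Sc_def Fc_def)
    qed
  qed
next
  case (Suc i')
  note iS = Suc
  show ?thesis
  proof (cases j)
    case 0
    have r4: "cf (Suc (Suc p)) (Suc i') + cf p (Suc i') = 2 * cf (Suc p) (Suc i') + cf (Suc p) i'"
      by (rule R4)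
    show ?thesis
    proof (cases i')
      case 0
      then show ?thesis using iS \<open>j = 0\<close> r4 by (simp add: Sc_def Fc_def)
    next
      case (Suc i'')
      have i2: "i' = Suc i''" by fact
      have eq: "- ((- 1 - real i'') * cf (Suc p) (Suc i'') / (1 + real i'')) = cf (Suc p) (Suc i'')"
        by (simp add: field_simps)
      show ?thesis using iS \<open>j = 0\<close> r4 i2 apply (simp add: Sc_def Fc_def)
        using eq by linarith
    qed
  next
    case (Suc j')
    have L: "(real (Suc i') + real (Suc j') - 1) *
      (cf p (Suc i') * cf (Suc (Suc p)) (Suc j') + cf p (Suc j') * cf (Suc (Suc p)) (Suc i')
       - 2 * cf (Suc p) (Suc i') * cf (Suc p) (Suc j'))
    = (real (Suc j') - 1 - real (Suc i')) * cf (Suc p) (Suc i') * cf (Suc p) j'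
      - (real (Suc j') - real (Suc i') + 1) * cf (Suc p) i' * cf (Suc p) (Suc j')"
      by (rule local_S)
    have pos: "real (Suc i') + real (Suc j') - 1 > 0" by simp
    have e1: "real (Suc i') + real j' = real (Suc i') + real (Suc j') - 1" by simp
    have e2: "real i' + real (Suc j') = real (Suc i') + real (Suc j') - 1" by simp
    define D where "D = real (Suc i') + real (Suc j') - 1"
    have Dp: "D > 0" unfolding D_def by simp
    have "Sc p i j = ((real (Suc j') - 1 - real (Suc i')) * cf (Suc p) (Suc i') * cf (Suc p) j'
      - (real (Suc j') - real (Suc i') + 1) * cf (Suc p) i' * cf (Suc p) (Suc j')) / D"
      using L Dp unfolding D_def[symmetric] iS Suc Sc_def by (simp add: field_simps)
    also have "\<dots> = Fc p (Suc i') j' - Fc p i' (Suc j')"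
      unfolding Fc_def e1 e2 D_def[symmetric] using Dp by (simp add: field_simps)
    finally show ?thesis using iS Suc by simp
  qed
qed

lemma quad:
  fixes x :: "nat \<Rightarrow> real" and K :: nat
  shows "2 * ((\<Sum>k\<le>K. cf p k * x k) * (\<Sum>k\<le>K. cf (Suc (Suc p)) k * x k) - (\<Sum>k\<le>K. cf (Suc p) k * x k)^2)
   = (\<Sum>i\<le>K. \<Sum>j\<le>K. Sc p i j * (x i * x j))"
proof -
  have P1: "(\<Sum>k\<le>K. cf p k * x k) * (\<Sum>k\<le>K. cf (Suc (Suc p)) k * x k)
      = (\<Sum>i\<le>K. \<Sum>j\<le>K. cf p i * cf (Suc (Suc p)) j * (x i * x j))"
    by (simp add: sum_product mult_ac)
  have P2: "(\<Sum>i\<le>K. \<Sum>j\<le>K. cf p i * cf (Suc (Suc p)) j * (x i * x j))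
      = (\<Sum>i\<le>K. \<Sum>j\<le>K. cf p j * cf (Suc (Suc p)) i * (x i * x j))"
    by (subst sum.swap) (simp add: mult_ac)
  have P3: "(\<Sum>k\<le>K. cf (Suc p) k * x k)^2 = (\<Sum>i\<le>K. \<Sum>j\<le>K. cf (Suc p) i * cf (Suc p) j * (x i * x j))"
    by (simp add: power2_eq_square sum_product mult_ac)
  have "(\<Sum>i\<le>K. \<Sum>j\<le>K. Sc p i j * (x i * x j))
     = (\<Sum>i\<le>K. \<Sum>j\<le>K. cf p i * cf (Suc (Suc p)) j * (x i * x j))
      + (\<Sum>i\<le>K. \<Sum>j\<le>K. cf p j * cf (Suc (Suc p)) i * (x i * x j))
      - 2 * (\<Sum>i\<le>K. \<Sum>j\<le>K. cf (Suc p) i * cf (Suc p) j * (x i * x j))"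
    unfolding Sc_def by (simp add: sum.distrib sum_subtractf sum_distrib_left algebra_simps)
  then show ?thesis using P1 P2 P3 by simp
qed

lemma delta_sum:
  fixes x :: "nat \<Rightarrow> real"
  assumes K: "1 \<le> K"
  shows "(\<Sum>i\<le>K. \<Sum>j\<le>K. (if i + j = 1 then 1 else 0) * (x i * x j)) = 2 * (x 0 * x 1)"
proof -
  have inner: "(\<Sum>j\<le>K. (if i + j = 1 then 1 else 0) * (x i * x j))
     = (if i = 0 then x 0 * x 1 else if i = 1 then x 1 * x 0 else 0)" for i
  proof -
    consider "i = 0" | "i = 1" | "i \<ge> 2" by linarith
    then show ?thesis
    proof cases
      case 1
      then have "(\<Sum>j\<le>K. (if i + j = 1 then 1 else 0) * (x i * x j)) = (\<Sum>j\<le>K. if j = 1 then x 0 * x j else 0)"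
        by (intro sum.cong) auto
      also have "\<dots> = x 0 * x 1" using K by (simp add: sum.delta)
      finally show ?thesis using 1 by simp
    next
      case 2
      then have "(\<Sum>j\<le>K. (if i + j = 1 then 1 else 0) * (x i * x j)) = (\<Sum>j\<le>K. if j = 0 then x 1 * x j else 0)"
        by (intro sum.cong) auto
      also have "\<dots> = x 1 * x 0" by (simp add: sum.delta)
      finally show ?thesis using 2 by simp
    next
      case 3
      then show ?thesis by (intro trans[OF sum.neutral]) auto
    qed
  qed
  have "(\<Sum>i\<le>K. \<Sum>j\<le>K. (if i + j = 1 then 1 else 0) * (x i * x j))
     = (\<Sum>i\<le>K. (if i = 0 then x 0 * x 1 else 0) + (if i = 1 then x 1 * x 0 else 0))"
    using inner by (intro sum.cong) auto
  also have "\<dots> = x 0 * x 1 + x 1 * x 0" using K by (simp add: sum.distrib sum.delta)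
  finally show ?thesis by simp
qed

lemma shift_in:
  fixes f y :: "nat \<Rightarrow> real"
  shows "(\<Sum>j\<le>Suc M. (if j = 0 then 0 else f (j - 1)) * y j) = (\<Sum>j\<le>M. f j * y (Suc j))"
  by (simp add: sum.atMost_Suc_shift del: sum.atMost_Suc)

lemma Fc_zero1: "Suc p < i \<Longrightarrow> Fc p i j = 0"
  unfolding Fc_def using cf_zero[of "Suc p" i] by simp

lemma Fc_zero2: "Suc p < j \<Longrightarrow> Fc p i j = 0"
  unfolding Fc_def using cf_zero[of "Suc p" j] by simp

lemma term_nonneg:
  assumes lc: "log_convex x"
  shows "0 \<le> Fc p i j * (x i * x (Suc j) - x (Suc i) * x j)"
proof (cases "i \<le> j")
  case True
  have "0 \<le> Fc p i j" unfolding Fc_def using True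
    by (intro divide_nonneg_nonneg mult_nonneg_nonneg cf_nonneg) auto
  moreover have "0 \<le> x i * x (Suc j) - x (Suc i) * x j" using lc_mono[OF lc True] by simp
  ultimately show ?thesis by simp
next
  case False
  then have ji: "j \<le> i" by simp
  have "Fc p i j \<le> 0" unfolding Fc_def using False
    by (intro divide_nonpos_nonneg mult_nonpos_nonneg cf_nonneg) auto
  moreover have "x i * x (Suc j) - x (Suc i) * x j \<le> 0" using lc_mono[OF lc ji] by (simp add: mult.commute)
  ultimately show ?thesis by (simp add: mult_nonpos_nonpos)
qed

lemma main_ineq:
  assumes lc: "log_convex x"
  shows "(\<Sum>k\<le>Suc (Suc p). cf (Suc p) k * x k)^2
     \<le> (\<Sum>k\<le>Suc (Suc p). cf p k * x k) * (\<Sum>k\<le>Suc (Suc p). cf (Suc (Suc p)) k * x k)"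
proof -
  define M where "M = Suc p"
  define G1 where "G1 = (\<lambda>i j. (if j = 0 then 0 else Fc p i (j - 1)))"
  define G2 where "G2 = (\<lambda>i j. (if i = 0 then 0 else Fc p (i - 1) j))"
  define dl where "dl = (\<lambda>i j::nat. (if i + j = 1 then 1 else 0::real))"
  have Seq: "(\<Sum>i\<le>Suc M. \<Sum>j\<le>Suc M. Sc p i j * (x i * x j))
    = (\<Sum>i\<le>Suc M. \<Sum>j\<le>Suc M. dl i j * (x i * x j))
    + (\<Sum>i\<le>Suc M. \<Sum>j\<le>Suc M. G1 i j * (x i * x j))
    - (\<Sum>i\<le>Suc M. \<Sum>j\<le>Suc M. G2 i j * (x i * x j))"
    unfolding dl_def G1_def G2_def S_eq
    by (simp add: sum.distrib sum_subtractf algebra_simps del: sum.atMost_Suc)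
  have D: "(\<Sum>i\<le>Suc M. \<Sum>j\<le>Suc M. dl i j * (x i * x j)) = 2 * (x 0 * x 1)"
    unfolding dl_def by (rule delta_sum) simp
  have g1: "(\<Sum>i\<le>Suc M. \<Sum>j\<le>Suc M. G1 i j * (x i * x j))
      = (\<Sum>i\<le>M. \<Sum>j\<le>M. Fc p i j * (x i * x (Suc j)))"
  proof -
    have "(\<Sum>i\<le>Suc M. \<Sum>j\<le>Suc M. G1 i j * (x i * x j))
        = (\<Sum>i\<le>Suc M. \<Sum>j\<le>M. Fc p i j * (x i * x (Suc j)))"
      unfolding G1_def by (rule sum.cong[OF refl]) (rule shift_in)
    also have "\<dots> = (\<Sum>i\<le>M. \<Sum>j\<le>M. Fc p i j * (x i * x (Suc j)))
        + (\<Sum>j\<le>M. Fc p (Suc M) j * (x (Suc M) * x (Suc j)))"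
      by (rule sum.atMost_Suc)
    also have "(\<Sum>j\<le>M. Fc p (Suc M) j * (x (Suc M) * x (Suc j))) = 0"
      using Fc_zero1[of p "Suc M"] unfolding M_def by simp
    finally show ?thesis by simp
  qed
  have g2: "(\<Sum>i\<le>Suc M. \<Sum>j\<le>Suc M. G2 i j * (x i * x j))
      = (\<Sum>i\<le>M. \<Sum>j\<le>M. Fc p i j * (x (Suc i) * x j))"
  proof -
    have "(\<Sum>i\<le>Suc M. \<Sum>j\<le>Suc M. G2 i j * (x i * x j))
        = (\<Sum>j\<le>Suc M. G2 0 j * (x 0 * x j)) + (\<Sum>i\<le>M. \<Sum>j\<le>Suc M. G2 (Suc i) j * (x (Suc i) * x j))"
      by (rule sum.atMost_Suc_shift)
    also have "(\<Sum>j\<le>Suc M. G2 0 j * (x 0 * x j)) = 0" unfolding G2_def by simp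
    also have "(\<Sum>i\<le>M. \<Sum>j\<le>Suc M. G2 (Suc i) j * (x (Suc i) * x j))
        = (\<Sum>i\<le>M. \<Sum>j\<le>M. Fc p i j * (x (Suc i) * x j))"
    proof (rule sum.cong[OF refl])
      fix i
      assume "i \<in> {..M}"
      have "(\<Sum>j\<le>Suc M. G2 (Suc i) j * (x (Suc i) * x j))
          = (\<Sum>j\<le>M. G2 (Suc i) j * (x (Suc i) * x j)) + G2 (Suc i) (Suc M) * (x (Suc i) * x (Suc M))"
        by (rule sum.atMost_Suc)
      also have "G2 (Suc i) (Suc M) = 0" unfolding G2_def M_def using Fc_zero2[of p "Suc (Suc p)" i] by simp
      finally show "(\<Sum>j\<le>Suc M. G2 (Suc i) j * (x (Suc i) * x j)) = (\<Sum>j\<le>M. Fc p i j * (x (Suc i) * x j))"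
        unfolding G2_def by simp
    qed
    finally show ?thesis by simp
  qed
  have nn: "0 \<le> (\<Sum>i\<le>M. \<Sum>j\<le>M. Fc p i j * (x i * x (Suc j) - x (Suc i) * x j))"
    by (intro sum_nonneg term_nonneg[OF lc])
  have split: "(\<Sum>i\<le>M. \<Sum>j\<le>M. Fc p i j * (x i * x (Suc j) - x (Suc i) * x j))
     = (\<Sum>i\<le>M. \<Sum>j\<le>M. Fc p i j * (x i * x (Suc j))) - (\<Sum>i\<le>M. \<Sum>j\<le>M. Fc p i j * (x (Suc i) * x j))"
    by (simp add: sum_subtractf right_diff_distrib del: sum.atMost_Suc)
  have x01: "0 \<le> x 0 * x 1" using lc unfolding log_convex_def by simp
  have Q: "2 * ((\<Sum>k\<le>Suc M. cf p k * x k) * (\<Sum>k\<le>Suc M. cf (Suc (Suc p)) k * x k) - (\<Sum>k\<le>Suc M. cf (Suc p) k * x k)^2)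
   = (\<Sum>i\<le>Suc M. \<Sum>j\<le>Suc M. Sc p i j * (x i * x j))"
    by (rule quad)
  have "0 \<le> (\<Sum>i\<le>Suc M. \<Sum>j\<le>Suc M. Sc p i j * (x i * x j))"
    unfolding Seq D g1 g2 using nn split x01 by linarith
  then show ?thesis using Q unfolding M_def by simp
qed

theorem proposition4p9:
  fixes x :: "nat \<Rightarrow> real"
  assumes "log_convex x"
  shows "log_convex (\<lambda>n. \<Sum>k=0..n. real ((n + k) choose (n - k)) * x k)"
proof -
  have nnx: "\<And>k. 0 \<le> x k" using assms unfolding log_convex_def by auto
  have zsum: "(\<Sum>k=0..N. real ((N + k) choose (N - k)) * x k) = (\<Sum>k\<le>M. cf N k * x k)"
    if NM: "N \<le> M" for N M :: nat
  proof -
    have "(\<Sum>k=0..N. real ((N + k) choose (N - k)) * x k) = (\<Sum>k\<le>N. cf N k * x k)"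
      unfolding atLeast0AtMost
    proof (rule sum.cong[OF refl])
      fix k assume "k \<in> {..N}"
      then have kN: "k \<le> N" by simp
      have "(N + k) choose (N - k) = (N + k) choose ((N + k) - (N - k))"
        by (rule binomial_symmetric) simp
      also have "(N + k) - (N - k) = 2 * k" using kN by simp
      finally show "real ((N + k) choose (N - k)) * x k = cf N k * x k" unfolding cf_def by simp
    qed
    also have "\<dots> = (\<Sum>k\<le>M. cf N k * x k)"
      by (rule sum.mono_neutral_left) (use NM cf_zero[of N] in auto)
    finally show ?thesis .
  qed
  show ?thesis unfolding log_convex_def
  proof (intro conjI allI impI)
    fix n :: nat
    show "0 \<le> (\<Sum>k=0..n. real ((n + k) choose (n - k)) * x k)"
      by (intro sum_nonneg mult_nonneg_nonneg nnx) simp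
  next
    fix k :: nat
    assume "1 \<le> k"
    then obtain p where kp: "k = Suc p" by (cases k) auto
    have e0: "(\<Sum>j=0..k - 1. real ((k - 1 + j) choose (k - 1 - j)) * x j) = (\<Sum>j\<le>Suc (Suc p). cf p j * x j)"
      unfolding kp using zsum[of p "Suc (Suc p)"] by simp
    have e1: "(\<Sum>j=0..k. real ((k + j) choose (k - j)) * x j) = (\<Sum>j\<le>Suc (Suc p). cf (Suc p) j * x j)"
      unfolding kp using zsum[of "Suc p" "Suc (Suc p)"] by simp
    have e2: "(\<Sum>j=0..k + 1. real ((k + 1 + j) choose (k + 1 - j)) * x j) = (\<Sum>j\<le>Suc (Suc p). cf (Suc (Suc p)) j * x j)"
      unfolding kp using zsum[of "Suc (Suc p)" "Suc (Suc p)"] by simp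
    show "(\<Sum>j=0..k. real ((k + j) choose (k - j)) * x j)^2
        \<le> (\<Sum>j=0..k - 1. real ((k - 1 + j) choose (k - 1 - j)) * x j) *
          (\<Sum>j=0..k + 1. real ((k + 1 + j) choose (k + 1 - j)) * x j)"
      unfolding e0 e1 e2 by (rule main_ineq[OF assms])
  qed
qed

end
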